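(* Let $m$ and $k$ be positive integers with $k\leq m/2$, and let $H$ be $\mathrm{Alt}(m)$ or $\mathrm{Sym}(m)$ in its natural action on the set of $k$-element subsets of $\{1,\ldots,m\}$. If $H$ contains a permutation $g$ that has at most four cycles in this action, then either $k=3$ and $m=6$; or $k=2$ and $m\leq 9$; or $k=1$.
   Context: The number of cycles of a permutation is the number of orbits of the cyclic group it generates, fixed points included. *)

theory Defs
  imports "HOL-Combinatorics.Permutations"
begin

definition Sym :: "nat \<Rightarrow> (nat \<Rightarrow> nat) set" where
  "Sym m = {g. g permutes {1..m}}"

definition Alt :: "nat \<Rightarrow> (nat \<Rightarrow> nat) set" where
  "Alt m = {g. g permutes {1..m} \<and> evenperm g}"

definition ksubsets :: "nat \<Rightarrow> nat \<Rightarrow> nat set set" where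
  "ksubsets m k = {A. A \<subseteq> {1..m} \<and> card A = k}"

text \<open>Orbit of x under the cyclic group generated by a permutation f of a finite set X
  (for a permutation of a finite set, the forward orbit equals the orbit of the generated group).\<close>
definition cyc_orbit :: "('a \<Rightarrow> 'a) \<Rightarrow> 'a set \<Rightarrow> 'a \<Rightarrow> 'a set" where
  "cyc_orbit f X x = {y \<in> X. \<exists>n. (f ^^ n) x = y}"

text \<open>Number of cycles of f acting on X: number of orbits, fixed points included.\<close>
definition num_cycles :: "('a \<Rightarrow> 'a) \<Rightarrow> 'a set \<Rightarrow> nat" where
  "num_cycles f X = card (cyc_orbit f X ` X)"

end

theory Submission
  imports Defs Complex_Main "HOL-Combinatorics.Orbits"
begin


lemma inv_le_num_cycles:
  assumes fin: "finite X" and cl: "\<And>A. A \<in> X \<Longrightarrow> f A \<in> X"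
    and inv: "\<And>A. A \<in> X \<Longrightarrow> h (f A) = h A"
  shows "card (h ` X) \<le> num_cycles f X"
proof -
  have pow: "A \<in> X \<Longrightarrow> (f^^n) A \<in> X \<and> h ((f^^n) A) = h A" for A n
    by (induction n) (auto simp: cl inv)
  let ?r = "\<lambda>Q. h (SOME B. B \<in> Q)"
  have "h ` X \<subseteq> ?r ` (cyc_orbit f X ` X)"
  proof
    fix y assume "y \<in> h ` X"
    then obtain A where A: "A \<in> X" "y = h A" by auto
    have "\<exists>n. (f ^^ n) A = A" by (rule exI[of _ 0]) simp
    hence ne: "A \<in> cyc_orbit f X A" using A by (auto simp: cyc_orbit_def)
    have "(SOME B. B \<in> cyc_orbit f X A) \<in> cyc_orbit f X A" using ne by (rule someI)
    hence "\<exists>n. (f^^n) A = (SOME B. B \<in> cyc_orbit f X A)" unfolding cyc_orbit_def by blast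
    then obtain n where "(SOME B. B \<in> cyc_orbit f X A) = (f^^n) A" by metis
    hence "?r (cyc_orbit f X A) = h A" using pow A(1) by simp
    thus "y \<in> ?r ` (cyc_orbit f X ` X)" using A by force
  qed
  hence "card (h ` X) \<le> card (?r ` (cyc_orbit f X ` X))" by (intro card_mono) (auto simp: fin)
  also have "\<dots> \<le> card (cyc_orbit f X ` X)" by (rule card_image_le) (simp add: fin)
  finally show ?thesis by (simp add: num_cycles_def)
qed

definition orbs :: "(nat \<Rightarrow> nat) \<Rightarrow> nat set \<Rightarrow> nat \<Rightarrow> nat set set set" where
  "orbs g C a = (\<lambda>U. range (\<lambda>n. (g^^n) ` U)) ` {U. U \<subseteq> C \<and> card U = a}"

lemma orbs_bound:
  assumes fC: "finite C" and d: "0 < d" and per: "\<And>y. y \<in> C \<Longrightarrow> (g^^d) y = y"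
  shows "card C choose a \<le> d * card (orbs g C a)"
proof -
  let ?P = "{U. U \<subseteq> C \<and> card U = a}"
  have finP: "finite ?P" by (rule finite_subset[of _ "Pow C"]) (auto simp: fC)
  have perU: "(g^^n) ` U = (g^^(n mod d)) ` U" if "U \<subseteq> C" for U n
  proof (intro image_cong refl)
    fix y assume "y \<in> U"
    hence "(g^^d) y = y" using that per by auto
    thus "(g^^n) y = (g^^(n mod d)) y" by (simp add: funpow_mod_eq)
  qed
  have rs: "range (\<lambda>n. (g^^n) ` U) \<subseteq> (\<lambda>n. (g^^n) ` U) ` {..<d}" if "U \<subseteq> C" for U
  proof
    fix Y assume "Y \<in> range (\<lambda>n. (g^^n) ` U)"
    then obtain n where "Y = (g^^n) ` U" by auto
    hence "Y = (g^^(n mod d)) ` U" using perU[OF that] by simp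
    moreover have "n mod d \<in> {..<d}" using d by simp
    ultimately show "Y \<in> (\<lambda>n. (g^^n) ` U) ` {..<d}" by blast
  qed
  have oc: "card (range (\<lambda>n. (g^^n) ` U)) \<le> d" if "U \<subseteq> C" for U
  proof -
    have "card (range (\<lambda>n. (g^^n) ` U)) \<le> card ((\<lambda>n. (g^^n) ` U) ` {..<d})"
      using rs[OF that] by (intro card_mono) auto
    also have "\<dots> \<le> d" using card_image_le[of "{..<d}"] by simp
    finally show ?thesis .
  qed
  have rf: "finite (range (\<lambda>n. (g^^n) ` U))" if "U \<subseteq> C" for U
  proof -
    show ?thesis using rs[OF that] by (rule finite_subset) simp
  qed
  have fo: "finite (orbs g C a)" unfolding orbs_def using finP by simp
  have "?P \<subseteq> \<Union> (orbs g C a)"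
  proof
    fix U assume "U \<in> ?P"
    moreover have "U \<in> range (\<lambda>n. (g^^n) ` U)" by (rule range_eqI[of _ _ 0]) simp
    ultimately show "U \<in> \<Union> (orbs g C a)" by (auto simp: orbs_def)
  qed
  hence "card ?P \<le> card (\<Union> (orbs g C a))"
    using fo rf by (intro card_mono) (auto simp: orbs_def)
  also have "\<dots> \<le> sum card (orbs g C a)" by (rule card_Union_le_sum_card)
  also have "\<dots> \<le> card (orbs g C a) * d"
    using oc by (intro sum_bounded_above[where K=d, simplified]) (auto simp: orbs_def)
  finally show ?thesis using n_subsets[OF fC, of a] by (simp add: mult.commute)
qed
lemma orbs_finite: "finite C \<Longrightarrow> finite (orbs g C a)"
  unfolding orbs_def by (rule finite_imageI, rule finite_subset[of _ "Pow C"]) auto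

lemma core:
  assumes g: "g permutes {1..m}"
    and C: "C \<subseteq> {1..m}" "g ` C = C" "0 < d" "\<And>y. y \<in> C \<Longrightarrow> (g^^d) y = y"
    and S: "S \<subseteq> {1..m}" "g ` S = S" "C \<inter> S = {}"
    and F: "finite F" "\<And>a b. (a,b) \<in> F \<Longrightarrow> a \<le> card C \<and> b \<le> card S \<and> a + b \<le> k \<and> k - (a+b) \<le> m - card C - card S"
  shows "(\<Sum>p\<in>F. card (orbs g C (fst p))) \<le> num_cycles (\<lambda>A. g ` A) (ksubsets m k)"
proof -
  let ?X = "ksubsets m k"
  let ?h = "\<lambda>A. (range (\<lambda>n. (g^^n) ` (A \<inter> C)), card (A \<inter> S))"
  have inj: "inj g" using g permutes_inj by blast
  have fC: "finite C" "finite S" using C(1) S(1) finite_subset by auto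
  have finX: "finite ?X" unfolding ksubsets_def
    by (rule finite_subset[of _ "Pow {1..m}"]) auto
  have cl: "g ` A \<in> ?X" if "A \<in> ?X" for A
  proof -
    have "g ` A \<subseteq> g ` {1..m}" using that by (auto simp: ksubsets_def)
    also have "\<dots> = {1..m}" using g by (rule permutes_image)
    finally show ?thesis using that card_image[OF inj_on_subset[OF inj subset_UNIV]]
      by (auto simp: ksubsets_def)
  qed
  have per: "(g^^(n+d)) ` U = (g^^n) ` U" if "U \<subseteq> C" for U n
  proof (intro image_cong refl)
    fix y assume "y \<in> U"
    hence "(g^^d) y = y" using that C(4) by auto
    thus "(g^^(n+d)) y = (g^^n) y" by (simp add: funpow_add)
  qed
  have rg: "range (\<lambda>n. (g^^n) ` (g ` U)) = range (\<lambda>n. (g^^n) ` U)" if "U \<subseteq> C" for U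
  proof -
    have e: "(g^^n) ` (g ` U) = (g^^(Suc n)) ` U" for n
      by (simp add: image_comp funpow_Suc_right del: funpow.simps)
    show ?thesis
    proof (intro equalityI subsetI)
      fix Y assume "Y \<in> range (\<lambda>n. (g^^n) ` (g ` U))"
      then obtain n where "Y = (g^^n) ` (g ` U)" by auto
      hence "Y = (g^^(Suc n)) ` U" by (simp only: e)
      thus "Y \<in> range (\<lambda>n. (g^^n) ` U)" by blast
    next
      fix Y assume "Y \<in> range (\<lambda>n. (g^^n) ` U)"
      then obtain n where "Y = (g^^n) ` U" by auto
      also have "\<dots> = (g^^(n+d)) ` U" using per[OF that] by simp
      also have "\<dots> = (g^^(Suc (n + d - 1))) ` U" using C(3) by simp
      also have "\<dots> = (g^^(n + d - 1)) ` (g ` U)" by (simp only: e)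
      finally show "Y \<in> range (\<lambda>n. (g^^n) ` (g ` U))" by blast
    qed
  qed
  have inv: "?h (g ` A) = ?h A" if "A \<in> ?X" for A
  proof -
    have 1: "g ` A \<inter> C = g ` (A \<inter> C)" using image_Int[OF inj, of A C] C(2) by simp
    have 2: "g ` A \<inter> S = g ` (A \<inter> S)" using image_Int[OF inj, of A S] S(2) by simp
    show ?thesis unfolding 1 2 using rg[of "A \<inter> C"] card_image[OF inj_on_subset[OF inj subset_UNIV]]
      by simp
  qed
  have le: "card (?h ` ?X) \<le> num_cycles (\<lambda>A. g ` A) ?X"
    by (rule inv_le_num_cycles[where f="\<lambda>A. g ` A" and h="?h", OF finX cl inv])
  let ?T = "\<lambda>p. orbs g C (fst p) \<times> {snd p}"
  have sub: "(\<Union>p\<in>F. ?T p) \<subseteq> ?h ` ?X"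
  proof
    fix z assume "z \<in> (\<Union>p\<in>F. ?T p)"
    then obtain a b U where ab: "(a,b) \<in> F" and U: "U \<subseteq> C" "card U = a"
      and z: "z = (range (\<lambda>n. (g^^n) ` U), b)"
      by (auto simp: orbs_def)
    from F(2)[OF ab] have c: "a \<le> card C" "b \<le> card S" "a + b \<le> k" "k - (a+b) \<le> m - card C - card S" by auto
    obtain V where V: "V \<subseteq> S" "card V = b" "finite V" using obtain_subset_with_card_n[OF c(2)] by metis
    let ?R = "{1..m} - (C \<union> S)"
    have cR: "card ?R = m - card C - card S"
    proof -
      have "card (C \<union> S) = card C + card S" using card_Un_disjoint[OF fC S(3)] .
      moreover have "card ?R = card {1..m} - card (C \<union> S)"
        using C(1) S(1) by (intro card_Diff_subset) (auto intro: finite_subset)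
      ultimately show ?thesis by simp
    qed
    obtain W where W: "W \<subseteq> ?R" "card W = k - (a+b)" "finite W"
      using obtain_subset_with_card_n[of "k - (a+b)" ?R] c(4) cR by metis
    let ?A = "U \<union> V \<union> W"
    have fU: "finite U" using U(1) fC(1) finite_subset by auto
    have "card ?A = k"
    proof -
      have "card (U \<union> V) = a + b" using card_Un_disjoint[OF fU V(3)] U V S(3) by auto
      moreover have "card (U \<union> V \<union> W) = card (U \<union> V) + card W"
        using fU V(3) W U(1) V(1) by (intro card_Un_disjoint) auto
      ultimately show ?thesis using W(2) c(3) by simp
    qed
    moreover have "?A \<subseteq> {1..m}" using U(1) V(1) W(1) C(1) S(1) by auto
    ultimately have AX: "?A \<in> ?X" by (simp add: ksubsets_def)
    have "?A \<inter> C = U" using U(1) V(1) W(1) S(3) by auto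
    moreover have "?A \<inter> S = V" using U(1) V(1) W(1) S(3) by auto
    ultimately have "?h ?A = z" using z V(2) by simp
    thus "z \<in> ?h ` ?X" using AX by force
  qed
  have disj: "?T p \<inter> ?T q = {}" if "p \<in> F" "q \<in> F" "p \<noteq> q" for p q
  proof (rule ccontr)
    assume "?T p \<inter> ?T q \<noteq> {}"
    then obtain Q where Q: "Q \<in> orbs g C (fst p)" "Q \<in> orbs g C (fst q)" and sn: "snd p = snd q" by auto
    hence fd: "fst p \<noteq> fst q" using that(3) by (auto simp: prod_eq_iff)
    from Q obtain U U' where U: "card U = fst p" "Q = range (\<lambda>n. (g^^n) ` U)"
      and U': "card U' = fst q" "Q = range (\<lambda>n. (g^^n) ` U')" by (auto simp: orbs_def)
    have "U \<in> Q" using U(2) by (auto intro: range_eqI[of _ _ 0])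
    then obtain n where "U = (g^^n) ` U'" using U'(2) by auto
    hence "card U = card U'" using card_image[OF inj_on_subset[OF inj_fn[OF inj] subset_UNIV]] by simp
    thus False using U(1) U'(1) fd by simp
  qed
  have "card (\<Union>p\<in>F. ?T p) = (\<Sum>p\<in>F. card (?T p))"
    using F(1) disj orbs_finite[OF fC(1)] by (intro card_UN_disjoint) auto
  also have "\<dots> = (\<Sum>p\<in>F. card (orbs g C (fst p)))" 
  proof (rule sum.cong[OF refl])
    fix p show "card (orbs g C (fst p) \<times> {snd p}) = card (orbs g C (fst p))"
      by (simp only: card_cartesian_product card.insert card.empty) simp
  qed
  moreover have "card (\<Union>p\<in>F. ?T p) \<le> card (?h ` ?X)"
    using sub finite_imageI[OF finX] by (rule card_mono[rotated])
  ultimately have "(\<Sum>p\<in>F. card (orbs g C (fst p))) \<le> card (?h ` ?X)"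
    by linarith
  thus ?thesis using le by simp
qed

lemma orbs_ne: "finite C \<Longrightarrow> a \<le> card C \<Longrightarrow> 1 \<le> card (orbs g C a)"
proof -
  assume "finite C" "a \<le> card C"
  then obtain U where "U \<subseteq> C" "card U = a" using obtain_subset_with_card_n by metis
  hence "orbs g C a \<noteq> {}" by (auto simp: orbs_def)
  thus ?thesis using orbs_finite[OF \<open>finite C\<close>] by (simp add: Suc_le_eq card_gt_0_iff)
qed

lemma two_choose2: "2 * (n choose 2) = n * (n - 1)"
proof -
  have "even (n * (n - 1))" by (cases "even n") auto
  thus ?thesis by (simp add: choose_two)
qed
lemma choose3_gt: "7 \<le> n \<Longrightarrow> 4 * n < n choose 3"
proof (induction n rule: nat_induct_at_least)
  case base then show ?case by (simp add: numeral_eq_Suc)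
next
  case (Suc n)
  have "(Suc n) choose 3 = (n choose 2) + (n choose 3)"
    by (simp add: numeral_eq_Suc)
  moreover have "7 * 6 \<le> n * (n - 1)" using Suc(1) by (intro mult_le_mono) auto
  hence "4 \<le> n choose 2" using two_choose2[of n] by linarith
  ultimately show ?case using Suc by simp
qed

lemma funpow_perm_in: "g permutes S \<Longrightarrow> x \<in> S \<Longrightarrow> (g^^n) x \<in> S"
  by (induction n) (auto simp: permutes_in_image)

lemma funpow_mult_fix: "(g^^L) y = y \<Longrightarrow> (g^^(L*q)) y = y"
proof (induction q)
  case (Suc q)
  have "(g^^(L * Suc q)) y = (g^^L) ((g^^(L*q)) y)" by (simp add: funpow_add mult.commute)
  thus ?case using Suc by simp
qed simp

lemma cyc_facts:
  fixes g :: "nat \<Rightarrow> nat"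
  assumes g: "g permutes {1..m}" and x: "x \<in> {1..m}"
  shows "orbit g x \<subseteq> {1..m}" "g ` orbit g x = orbit g x" "0 < card (orbit g x)"
    "\<And>y. y \<in> orbit g x \<Longrightarrow> (g^^(card (orbit g x))) y = y" "x \<in> orbit g x"
    "finite (orbit g x)"
proof -
  have perm: "permutation g" using g unfolding permutation_permutes by (intro exI[of _ "{1..m}"]) simp
  show xin: "x \<in> orbit g x" by (rule permutation_self_in_orbit[OF perm])
  have alt: "orbit g x = {(g^^n) x | n. True}" by (rule orbit_altdef_permutation[OF perm])
  let ?D = "funpow_dist1 g x x"
  have eq: "orbit g x = (\<lambda>n. (g^^n) x) ` {0..<?D}" by (rule orbit_conv_funpow_dist1[OF xin])
  have cD: "card (orbit g x) = ?D"
    unfolding eq using card_image[OF inj_on_funpow_dist1[OF xin]] by simp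
  show "finite (orbit g x)" unfolding eq by simp
  show "0 < card (orbit g x)" unfolding cD by simp
  have Dx: "(g^^?D) x = x" by (rule funpow_dist1_prop[OF xin])
  have per: "(g^^?D) ((g^^j) x) = (g^^j) x" for j
  proof -
    have "(g^^?D) ((g^^j) x) = (g^^(?D + j)) x" by (simp add: funpow_add)
    also have "\<dots> = (g^^j) ((g^^?D) x)" by (metis add.commute comp_apply funpow_add)
    finally show ?thesis using Dx by simp
  qed
  show "\<And>y. y \<in> orbit g x \<Longrightarrow> (g^^(card (orbit g x))) y = y"
  proof -
    fix y assume "y \<in> orbit g x"
    then obtain j where "y = (g^^j) x" unfolding alt by auto
    thus "(g^^(card (orbit g x))) y = y" using per[of j] by (simp only: cD)
  qed
  show "orbit g x \<subseteq> {1..m}" unfolding alt using funpow_perm_in[OF g x] by auto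
  show "g ` orbit g x = orbit g x"
  proof
    show "g ` orbit g x \<subseteq> orbit g x" by (auto intro: orbit.step)
    show "orbit g x \<subseteq> g ` orbit g x"
    proof
      fix y assume "y \<in> orbit g x"
      then obtain j where j: "y = (g^^j) x" unfolding alt by auto
      have s1: "Suc (j + ?D - 1) = j + ?D" by simp
      have "(g^^(j + ?D)) x = (g^^j) ((g^^?D) x)" by (simp only: funpow_add comp_apply)
      hence "y = (g^^(Suc (j + ?D - 1))) x" using j Dx by (simp only: s1)
      also have "\<dots> = g ((g^^(j + ?D - 1)) x)" by (simp only: funpow.simps comp_apply)
      finally show "y \<in> g ` orbit g x" unfolding alt by blast
    qed
  qed
qed

lemma orbit_disj:
  fixes g :: "nat \<Rightarrow> nat"
  assumes g: "g permutes {1..m}" and y: "y \<notin> orbit g x"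
  shows "orbit g x \<inter> orbit g y = {}"
proof (rule ccontr)
  have perm: "permutation g" using g unfolding permutation_permutes by (intro exI[of _ "{1..m}"]) simp
  assume "orbit g x \<inter> orbit g y \<noteq> {}"
  then obtain z where z: "z \<in> orbit g x" "z \<in> orbit g y" by auto
  have "y \<in> orbit g z" by (rule orbit_swap[OF permutation_self_in_orbit[OF perm] z(2)])
  hence "y \<in> orbit g x" using z(1) by (rule orbit_trans)
  thus False using y by simp
qed


lemma core0:
  assumes g: "g permutes {1..m}"
    and C: "C \<subseteq> {1..m}" "g ` C = C" "0 < d" "\<And>y. y \<in> C \<Longrightarrow> (g^^d) y = y"
    and A: "finite A" "\<And>a. a \<in> A \<Longrightarrow> a \<le> card C \<and> a \<le> k \<and> k - a \<le> m - card C"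
  shows "(\<Sum>a\<in>A. card (orbs g C a)) \<le> num_cycles (\<lambda>A. g ` A) (ksubsets m k)"
proof -
  have "(\<Sum>p\<in>(\<lambda>a. (a,0::nat)) ` A. card (orbs g C (fst p))) \<le> num_cycles (\<lambda>A. g ` A) (ksubsets m k)"
    using A by (intro core[OF g C, of "{}"]) auto
  moreover have "(\<Sum>p\<in>(\<lambda>a. (a,0::nat)) ` A. card (orbs g C (fst p))) = (\<Sum>a\<in>A. card (orbs g C a))"
    by (subst sum.reindex) (auto simp: inj_on_def)
  ultimately show ?thesis by simp
qed

lemma w2: "(L choose 2) \<le> L * c \<Longrightarrow> 0 < (L::nat) \<Longrightarrow> L - 1 \<le> 2 * c"
proof -
  assume a: "(L choose 2) \<le> L * c" "0 < L"
  have "L * (L - 1) = 2 * (L choose 2)" by (simp add: two_choose2)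
  also have "\<dots> \<le> 2 * (L * c)" using a(1) by simp
  also have "\<dots> = L * (2 * c)" by simp
  finally show ?thesis using a(2) by simp
qed

lemma cyc_bound:
  fixes g :: "nat \<Rightarrow> nat"
  assumes g: "g permutes {1..m}" and x: "x \<in> {1..m}"
  shows "card (orbit g x) choose a \<le> card (orbit g x) * card (orbs g (orbit g x) a)"
  using cyc_facts[OF g x] by (intro orbs_bound) auto

lemma main5:
  fixes g :: "nat \<Rightarrow> nat"
  assumes g: "g permutes {1..m}" and k2: "2 \<le> k" and km: "2*k \<le> m"
    and ex1: "\<not> (k = 3 \<and> m = 6)" and ex2: "\<not> (k = 2 \<and> m \<le> 9)"
  shows "5 \<le> num_cycles (\<lambda>A. g ` A) (ksubsets m k)"
proof -
  let ?N = "num_cycles (\<lambda>A. g ` A) (ksubsets m k)"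
  have cm: "card {1..m} = m" by simp
  have whole: "g ` {1..m} = {1..m}" using g by (rule permutes_image)
  have Lm: "card (orbit g x) \<le> m" if "x \<in> {1..m}" for x
    using card_mono[OF _ cyc_facts(1)[OF g that]] by simp
  show ?thesis
  proof (cases "\<forall>y\<in>{1..m}. card (orbit g y) \<le> 3")
    case True
    have fix6: "(g^^6) y = y" if y: "y \<in> {1..m}" for y
    proof -
      let ?L = "card (orbit g y)"
      have L: "?L = 1 \<or> ?L = 2 \<or> ?L = 3" using True y cyc_facts(3)[OF g y] by fastforce
      have "?L * (6 div ?L) = 6" using L by auto
      moreover have "(g^^(?L * (6 div ?L))) y = y"
        by (rule funpow_mult_fix, rule cyc_facts(4)[OF g y], rule cyc_facts(5)[OF g y])
      ultimately show ?thesis by simp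
    qed
    have "(\<Sum>a\<in>{k}. card (orbs g {1..m} a)) \<le> ?N"
      using km by (intro core0[OF g _ whole, of 6]) (auto simp: fix6)
    hence cN: "card (orbs g {1..m} k) \<le> ?N" by simp
    have cb: "m choose k \<le> 6 * card (orbs g {1..m} k)"
      using orbs_bound[of "{1..m}" 6 g k] fix6 by simp
    show ?thesis
    proof (cases "k = 2")
      case True
      hence "10 \<le> m" using ex2 by simp
      hence "10 * 9 \<le> m * (m - 1)" by (intro mult_le_mono) auto
      hence "90 \<le> 2 * (m choose 2)" using two_choose2[of m] by simp
      moreover have "m choose 2 \<le> 6 * card (orbs g {1..m} 2)" using cb True by simp
      moreover have "card (orbs g {1..m} 2) \<le> ?N" using cN True by simp
      ultimately show ?thesis by linarith
    next
      case False
      hence k3: "3 \<le> k" using k2 by simp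
      hence m7: "7 \<le> m" using km ex1 by auto
      have "m choose 3 \<le> m choose k" using binomial_mono[of 3 k m] k3 km by simp
      moreover have "4 * m < m choose 3" using choose3_gt[OF m7] .
      ultimately show ?thesis using cb cN m7 by linarith
    qed
  next
    case False
    then obtain x where x: "x \<in> {1..m}" and L4: "4 \<le> card (orbit g x)" by force
    show ?thesis
    proof (cases "k = 2")
      case True
      show ?thesis
      proof (cases "\<exists>x\<in>{1..m}. 6 \<le> card (orbit g x)")
        case True
        then obtain x where x: "x \<in> {1..m}" and L6: "6 \<le> card (orbit g x)" by blast
        note cf = cyc_facts[OF g x]
        let ?C = "orbit g x" let ?L = "card (orbit g x)"
        have m10: "10 \<le> m" using ex2 \<open>k = 2\<close> by simp
        have Lm': "?L \<le> m" by (rule Lm[OF x])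
        have c2: "?L - 1 \<le> 2 * card (orbs g ?C 2)"
          using w2[OF cyc_bound[OF g x, of 2]] cf(3) by simp
        have ne: "a \<le> ?L \<Longrightarrow> 1 \<le> card (orbs g ?C a)" for a using orbs_ne[OF cf(6)] by simp
        have core': "(\<Sum>a\<in>A. card (orbs g ?C a)) \<le> ?N" if "finite A" "\<And>a. a \<in> A \<Longrightarrow> a \<le> ?L \<and> a \<le> k \<and> k - a \<le> m - ?L" for A
          using that by (intro core0[OF g cf(1,2,3)]) (auto simp: cf(4))
        show ?thesis
        proof (cases "10 \<le> ?L")
          case True
          have "(\<Sum>a\<in>{2}. card (orbs g ?C a)) \<le> ?N" using True Lm' \<open>k = 2\<close> by (intro core') auto
          hence "card (orbs g ?C 2) \<le> ?N" by simp
          thus ?thesis using c2 True by linarith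
        next
          case False
          hence L9: "?L \<le> 9" by simp
          show ?thesis
          proof (cases "m = ?L + 1")
            case True
            have "(\<Sum>a\<in>{1,2}. card (orbs g ?C a)) \<le> ?N" using True L6 \<open>k = 2\<close> by (intro core') auto
            moreover have "1 \<le> card (orbs g ?C 1)" using ne L6 by simp
            ultimately show ?thesis using c2 True m10 by simp
          next
            case False
            have "(\<Sum>a\<in>{0,1,2}. card (orbs g ?C a)) \<le> ?N" using False Lm' L6 L9 m10 \<open>k = 2\<close> by (intro core') auto
            moreover have "1 \<le> card (orbs g ?C 1)" "1 \<le> card (orbs g ?C 0)" using ne L6 by auto
            ultimately show ?thesis using c2 L6 by simp
          qed
        qed
      next
        case False
        hence L5: "card (orbit g y) \<le> 5" if "y \<in> {1..m}" for y using that by force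
        note cf = cyc_facts[OF g x]
        let ?C = "orbit g x" let ?L = "card (orbit g x)"
        have m10: "10 \<le> m" using ex2 \<open>k = 2\<close> by simp
        have Lx: "?L \<le> 5" using L5[OF x] .
        have c2: "?L - 1 \<le> 2 * card (orbs g ?C 2)"
          using w2[OF cyc_bound[OF g x, of 2]] cf(3) by simp
        have ne: "a \<le> ?L \<Longrightarrow> 1 \<le> card (orbs g ?C a)" for a using orbs_ne[OF cf(6)] by simp
        have "\<not> {1..m} \<subseteq> ?C"
        proof
          assume "{1..m} \<subseteq> ?C"
          hence "card {1..m} \<le> ?L" by (rule card_mono[OF cf(6)])
          hence "m \<le> ?L" by simp
          thus False using Lx m10 by simp
        qed
        then obtain y where y: "y \<in> {1..m}" "y \<notin> ?C" by blast
        note cy = cyc_facts[OF g y(1)]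
        let ?S = "orbit g y"
        have disj: "?C \<inter> ?S = {}" by (rule orbit_disj[OF g y(2)])
        have cCS: "card (?C \<union> ?S) = ?L + card ?S" using card_Un_disjoint[OF cf(6) cy(6) disj] .
        show ?thesis
        proof (cases "{1..m} \<subseteq> ?C \<union> ?S")
          case False
          hence "?C \<union> ?S \<subset> {1..m}" using cf(1) cy(1) by auto
          hence "card (?C \<union> ?S) < card {1..m}" by (intro psubset_card_mono) auto
          hence "card (?C \<union> ?S) < m" by simp
          hence rest: "1 \<le> m - ?L - card ?S" using cCS by simp
          have F: "a \<le> ?L \<and> b \<le> card ?S \<and> a + b \<le> k \<and> k - (a+b) \<le> m - ?L - card ?S"
            if "(a,b) \<in> {(2,0),(1,0),(1,1),(0,1::nat)}" for a b
            using that rest L4 cy(3) \<open>k = 2\<close> by auto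
          have "(\<Sum>p\<in>{(2,0),(1,0),(1,1),(0,1::nat)}. card (orbs g ?C (fst p))) \<le> ?N"
            by (rule core[OF g cf(1,2,3) cf(4) cy(1,2) disj finite.insertI F]) auto
          hence "card (orbs g ?C 2) + card (orbs g ?C 1) + card (orbs g ?C 1) + card (orbs g ?C 0) \<le> ?N"
            by simp
          moreover have "1 \<le> card (orbs g ?C 1)" "1 \<le> card (orbs g ?C 0)" using ne L4 by auto
          ultimately show ?thesis using c2 L4 by linarith
        next
          case True
          hence "m \<le> card (?C \<union> ?S)" using card_mono[of "?C \<union> ?S" "{1..m}"] cf(6) cy(6) by simp
          hence m10': "m = 10" "?L = 5" "card ?S = 5" using cCS L5[OF y(1)] Lx m10 by auto
          have fix5: "(g^^5) z = z" if z: "z \<in> {1..m}" for z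
          proof (cases "z \<in> ?C")
            case True thus ?thesis using cf(4)[OF True] m10'(2) by simp
          next
            case False
            hence "z \<in> ?S" using \<open>{1..m} \<subseteq> ?C \<union> ?S\<close> z by auto
            thus ?thesis using cy(4)[OF \<open>z \<in> ?S\<close>] m10'(3) by simp
          qed
          have "(\<Sum>a\<in>{2}. card (orbs g {1..m} a)) \<le> ?N"
            using km \<open>k = 2\<close> by (intro core0[OF g _ whole, of 5]) (auto simp: fix5)
          hence cN: "card (orbs g {1..m} 2) \<le> ?N" by simp
          have cb: "m choose 2 \<le> 5 * card (orbs g {1..m} 2)"
            using orbs_bound[of "{1..m}" 5 g 2] fix5 by simp
          have "(10::nat) choose 2 = 45" by (simp add: choose_two)
          thus ?thesis using cb cN m10' by simp
        qed
      qed
    next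
      case False
      hence k3: "3 \<le> k" using k2 by simp
      have mk4: "k + 4 \<le> m" using km ex1 k3 by auto
      note cf = cyc_facts[OF g x]
      let ?C = "orbit g x" let ?L = "card (orbit g x)"
      have Lm': "?L \<le> m" by (rule Lm[OF x])
      have ne: "a \<le> ?L \<Longrightarrow> 1 \<le> card (orbs g ?C a)" for a using orbs_ne[OF cf(6)] by simp
      have cb: "?L choose a \<le> ?L * card (orbs g ?C a)" for a by (rule cyc_bound[OF g x])
      have core': "(\<Sum>a\<in>A. card (orbs g ?C a)) \<le> ?N" if "finite A" "\<And>a. a \<in> A \<Longrightarrow> a \<le> ?L \<and> a \<le> k \<and> k - a \<le> m - ?L" for A
        using that by (intro core0[OF g cf(1,2,3)]) (auto simp: cf(4))
      show ?thesis
      proof (cases "?L \<le> k")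
        case True
        have "(\<Sum>a\<in>{0,1,2,3,4}. card (orbs g ?C a)) \<le> ?N" using True L4 km by (intro core') auto
        hence "card (orbs g ?C 0) + card (orbs g ?C 1) + card (orbs g ?C 2) + card (orbs g ?C 3) + card (orbs g ?C 4) \<le> ?N" by simp
        moreover have "1 \<le> card (orbs g ?C 0)" "1 \<le> card (orbs g ?C 1)" "1 \<le> card (orbs g ?C 2)" "1 \<le> card (orbs g ?C 3)" "1 \<le> card (orbs g ?C 4)"
          using ne L4 by auto
        ultimately show ?thesis by linarith
      next
        case False
        show ?thesis
        proof (cases "7 \<le> ?L")
          case True
          define a0 where "a0 = max 3 (k - (m - ?L))"
          have a0: "3 \<le> a0" "2 * a0 \<le> ?L" "a0 \<le> k" "k - a0 \<le> m - ?L" using True km k3 Lm'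
            unfolding a0_def by auto
          have "(\<Sum>a\<in>{a0}. card (orbs g ?C a)) \<le> ?N" using a0 by (intro core') auto
          hence "card (orbs g ?C a0) \<le> ?N" by simp
          moreover have "?L choose 3 \<le> ?L choose a0" using binomial_mono[of 3 a0 ?L] a0 by simp
          moreover have "4 * ?L < ?L choose 3" using choose3_gt[OF True] .
          moreover have "?L choose a0 \<le> ?L * card (orbs g ?C a0)" by (rule cb)
          moreover have "?L * card (orbs g ?C a0) \<le> ?L * ?N" using calculation(1) by (rule mult_le_mono2)
          ultimately have "?L * 4 < ?L * ?N" by linarith
          hence "4 < ?N" by simp
          thus ?thesis by simp
        next
          case False
          hence "?L = 4 \<or> ?L = 5 \<or> ?L = 6" using L4 by auto
          moreover
          { assume L: "?L = 4"
            have "(\<Sum>a\<in>{0,1,2,3}. card (orbs g ?C a)) \<le> ?N" using L \<open>\<not> ?L \<le> k\<close> mk4 k3 by (intro core') auto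
            hence "card (orbs g ?C 0) + card (orbs g ?C 1) + card (orbs g ?C 2) + card (orbs g ?C 3) \<le> ?N" by simp
            moreover have "1 \<le> card (orbs g ?C 0)" "1 \<le> card (orbs g ?C 1)" "1 \<le> card (orbs g ?C 3)"
              using ne L by auto
            moreover have "2 \<le> card (orbs g ?C 2)" using cb[of 2] L by (simp add: choose_two)
            ultimately have ?thesis by linarith }
          moreover
          { assume L: "?L = 5"
            have "(\<Sum>a\<in>{1,2,3}. card (orbs g ?C a)) \<le> ?N" using L \<open>\<not> ?L \<le> k\<close> mk4 k3 by (intro core') auto
            hence "card (orbs g ?C 1) + card (orbs g ?C 2) + card (orbs g ?C 3) \<le> ?N" by simp
            moreover have "1 \<le> card (orbs g ?C 1)" using ne L by simp
            moreover have "2 \<le> card (orbs g ?C 2)" using cb[of 2] L by (simp add: choose_two)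
            moreover have "2 \<le> card (orbs g ?C 3)" using cb[of 3] L by (simp add: numeral_eq_Suc)
            ultimately have ?thesis by linarith }
          moreover
          { assume L: "?L = 6"
            have "(\<Sum>a\<in>{2,3}. card (orbs g ?C a)) \<le> ?N" using L \<open>\<not> ?L \<le> k\<close> mk4 k3 by (intro core') auto
            hence "card (orbs g ?C 2) + card (orbs g ?C 3) \<le> ?N" by simp
            moreover have "3 \<le> card (orbs g ?C 2)" using cb[of 2] L by (simp add: choose_two)
            moreover have "4 \<le> card (orbs g ?C 3)" using cb[of 3] L by (simp add: numeral_eq_Suc)
            ultimately have ?thesis by linarith }
          ultimately show ?thesis by blast
        qed
      qed
    qed
  qed
qed


theorem proposition3p4:
  fixes m k :: nat and H :: "(nat \<Rightarrow> nat) set" and g :: "nat \<Rightarrow> nat"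
  assumes "0 < m" and "0 < k" and "2 * k \<le> m"
    and "H = Alt m \<or> H = Sym m"
    and "g \<in> H"
    and "num_cycles (\<lambda>A. g ` A) (ksubsets m k) \<le> 4"
  shows "(k = 3 \<and> m = 6) \<or> (k = 2 \<and> m \<le> 9) \<or> k = 1"
proof (rule ccontr)
  assume neg: "\<not> ?thesis"
  have g: "g permutes {1..m}" using assms(4,5) by (auto simp: Alt_def Sym_def)
  have "2 \<le> k" using neg assms(2) by auto
  hence "5 \<le> num_cycles (\<lambda>A. g ` A) (ksubsets m k)"
    using neg assms(3) by (intro main5[OF g]) auto
  thus False using assms(6) by simp
qed

end
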